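(* Let $(X,\mu)$ and $(Y,\nu)$ be probability spaces and $R$ a measure on $X\times Y$. For $\phi\colon Y\to\mathbb{R}$ let $$\phi^+(x)=\ln\Big(\int_Y e^{\phi(y)}\,R(dx,dy)/\mu(dx)\Big)$$ (a Radon--Nikodym derivative, assumed well-defined). Let $F(\phi)=\int_X\phi^+\,d\mu$ and let $F^*$ be its convex conjugate. Let $\phi,\widetilde\phi\colon Y\to\mathbb{R}$ be two potentials. Set $$\pi(dx,dy)=e^{\phi(y)-\phi^+(x)}R(dx,dy),\qquad \widetilde\pi(dx,dy)=e^{\widetilde\phi(y)-\widetilde\phi^+(x)}R(dx,dy),$$ and let $\rho$ and $\widetilde\rho$ be their respective $Y$-marginals. Then $$F(\phi|\widetilde\phi)=F^*(\widetilde\rho|\rho)=H(\widetilde\pi|\pi),$$ where $H(\widetilde\pi|\pi)=\iint\ln(\widetilde\pi/\pi)\,d\widetilde\pi$.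
   Context: For a differentiable convex functional $G$, its Bregman divergence is $$G(a|b)=G(a)-G(b)-\langle G'(b),a-b\rangle,$$ where $G'$ is the derivative (first variation) and $\langle\cdot,\cdot\rangle$ is the pairing between functions and measures, $\langle\phi,\rho\rangle=\int\phi\,d\rho$. The convex conjugate is $F^*(\rho)=\sup_\phi\langle\phi,\rho\rangle-F(\phi)$. One has $F'(\phi)=\rho$ and $F'(\widetilde\phi)=\widetilde\rho$, and the $X$-marginals of $\pi$ and $\widetilde\pi$ are $\mu$. *)

theory Defs
  imports "HOL-Probability.Probability"
begin

definition xmarg_exp :: "'a measure \<Rightarrow> ('a \<times> 'b) measure \<Rightarrow> ('b \<Rightarrow> real) \<Rightarrow> 'a measure" where
  "xmarg_exp M R \<phi> = distr (density R (\<lambda>p. ennreal (exp (\<phi> (snd p))))) M fst"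

definition cplus :: "'a measure \<Rightarrow> ('a \<times> 'b) measure \<Rightarrow> ('b \<Rightarrow> real) \<Rightarrow> 'a \<Rightarrow> real" where
  "cplus M R \<phi> x = ln (enn2real (RN_deriv M (xmarg_exp M R \<phi>) x))"

definition cplus_welldef :: "'a measure \<Rightarrow> ('a \<times> 'b) measure \<Rightarrow> ('b \<Rightarrow> real) \<Rightarrow> bool" where
  "cplus_welldef M R \<phi> \<longleftrightarrow>
     (\<exists>g \<in> borel_measurable M. (\<forall>x. 0 < g x) \<and> xmarg_exp M R \<phi> = density M (\<lambda>x. ennreal (g x)))"

definition Ffun :: "'a measure \<Rightarrow> ('a \<times> 'b) measure \<Rightarrow> ('b \<Rightarrow> real) \<Rightarrow> real" where
  "Ffun M R \<phi> = (\<integral>x. cplus M R \<phi> x \<partial>M)"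

definition Fdom :: "'a measure \<Rightarrow> 'b measure \<Rightarrow> ('a \<times> 'b) measure \<Rightarrow> ('b \<Rightarrow> real) \<Rightarrow> bool" where
  "Fdom M N R \<phi> \<longleftrightarrow> \<phi> \<in> borel_measurable N \<and> cplus_welldef M R \<phi> \<and> integrable M (cplus M R \<phi>)"

definition Fstar :: "'a measure \<Rightarrow> 'b measure \<Rightarrow> ('a \<times> 'b) measure \<Rightarrow> 'b measure \<Rightarrow> ereal" where
  "Fstar M N R \<rho> = (SUP \<psi> \<in> {\<psi>. Fdom M N R \<psi> \<and> integrable \<rho> \<psi>}.
                       ereal ((\<integral>y. \<psi> y \<partial>\<rho>) - Ffun M R \<psi>))"

definition gibbs :: "'a measure \<Rightarrow> ('a \<times> 'b) measure \<Rightarrow> ('b \<Rightarrow> real) \<Rightarrow> ('a \<times> 'b) measure" where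
  "gibbs M R \<phi> = density R (\<lambda>p. ennreal (exp (\<phi> (snd p) - cplus M R \<phi> (fst p))))"

definition ymarg :: "'b measure \<Rightarrow> ('a \<times> 'b) measure \<Rightarrow> 'b measure" where
  "ymarg N \<pi> = distr \<pi> N snd"

text \<open>Bregman divergence of F:  F(a|b) = F(a) - F(b) - <F'(b), a - b>,  with F'(b) = rho_b.\<close>
definition bregman_F :: "'a measure \<Rightarrow> 'b measure \<Rightarrow> ('a \<times> 'b) measure \<Rightarrow> ('b \<Rightarrow> real) \<Rightarrow> ('b \<Rightarrow> real) \<Rightarrow> real" where
  "bregman_F M N R \<phi> \<phi>' = Ffun M R \<phi> - Ffun M R \<phi>'
     - (\<integral>y. \<phi> y - \<phi>' y \<partial>(ymarg N (gibbs M R \<phi>')))"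

text \<open>Bregman divergence of F*:  F*(rho'|rho) = F*(rho') - F*(rho) - <(F*)'(rho), rho' - rho>,
  where (F*)'(rho) = phi for rho = F'(phi); the pairing is  int phi d rho' - int phi d rho.\<close>
definition bregman_Fstar :: "'a measure \<Rightarrow> 'b measure \<Rightarrow> ('a \<times> 'b) measure \<Rightarrow> ('b \<Rightarrow> real)
     \<Rightarrow> 'b measure \<Rightarrow> 'b measure \<Rightarrow> ereal" where
  "bregman_Fstar M N R \<phi> \<rho>' \<rho> = Fstar M N R \<rho>' - Fstar M N R \<rho>
     - ereal ((\<integral>y. \<phi> y \<partial>\<rho>') - (\<integral>y. \<phi> y \<partial>\<rho>))"

end

theory Submission
  imports Defs
begin

lemma sets_gibbs[simp, measurable_cong]: "sets (gibbs M R a) = sets R"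
  by (simp add: gibbs_def)

lemma space_gibbs[simp]: "space (gibbs M R a) = space R"
  by (simp add: gibbs_def)

context
  fixes M :: "'a measure" and N :: "'b measure" and R :: "('a \<times> 'b) measure"
  assumes M: "prob_space M" and RS[measurable_cong]: "sets R = sets (M \<Otimes>\<^sub>M N)"
begin

lemma fst_meas[measurable]: "fst \<in> measurable R M"
  using measurable_cong_sets[OF RS refl] by simp

lemma snd_meas[measurable]: "snd \<in> measurable R N"
  using measurable_cong_sets[OF RS refl] by simp

lemma cplus_meas[measurable]: "cplus M R a \<in> borel_measurable M"
  unfolding cplus_def by measurable

lemma cplus_ae:
  assumes "cplus_welldef M R a"
  obtains g where "g \<in> borel_measurable M" "\<forall>x. 0 < g x"
    "xmarg_exp M R a = density M (\<lambda>x. ennreal (g x))"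
    "AE x in M. cplus M R a x = ln (g x)"
proof -
  interpret prob_space M by (rule M)
  from assms obtain g where g: "g \<in> borel_measurable M" "\<forall>x. 0 < g x"
    "xmarg_exp M R a = density M (\<lambda>x. ennreal (g x))"
    unfolding cplus_welldef_def by blast
  have "AE x in M. ennreal (g x) = RN_deriv M (xmarg_exp M R a) x"
    by (rule RN_deriv_unique) (use g in auto)
  then have "AE x in M. cplus M R a x = ln (g x)"
  proof eventually_elim
    case (elim x)
    then have "enn2real (RN_deriv M (xmarg_exp M R a) x) = g x"
      using g(2) by (metis enn2real_ennreal less_imp_le)
    then show ?case by (simp add: cplus_def)
  qed
  with g that show ?thesis by blast
qed

lemma gibbs_marg:
  assumes a[measurable]: "a \<in> borel_measurable N" and w: "cplus_welldef M R a"
  shows "distr (gibbs M R a) M fst = M"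
proof -
  obtain g where g[measurable]: "g \<in> borel_measurable M" and gp: "\<forall>x. 0 < g x"
    and gx: "xmarg_exp M R a = density M (\<lambda>x. ennreal (g x))"
    and gae: "AE x in M. cplus M R a x = ln (g x)"
    using cplus_ae[OF w] by blast
  show ?thesis
  proof (rule measure_eqI)
    show "sets (distr (gibbs M R a) M fst) = sets M" by simp
    fix A assume A[measurable]: "A \<in> sets (distr (gibbs M R a) M fst)"
    then have A'[measurable]: "A \<in> sets M" by simp
    have "emeasure (distr (gibbs M R a) M fst) A
        = emeasure (gibbs M R a) (fst -` A \<inter> space R)"
      by (subst emeasure_distr) auto
    also have "\<dots> = (\<integral>\<^sup>+ p. ennreal (exp (a (snd p) - cplus M R a (fst p))) * indicator (fst -` A \<inter> space R) p \<partial>R)"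
      unfolding gibbs_def by (subst emeasure_density) auto
    also have "\<dots> = (\<integral>\<^sup>+ p. ennreal (exp (a (snd p))) * (indicator A (fst p) * ennreal (exp (- cplus M R a (fst p)))) \<partial>R)"
      by (intro nn_integral_cong) (auto simp: indicator_def exp_diff ennreal_mult[symmetric] divide_inverse exp_minus)
    also have "\<dots> = (\<integral>\<^sup>+ p. (indicator A (fst p) * ennreal (exp (- cplus M R a (fst p)))) \<partial>density R (\<lambda>p. ennreal (exp (a (snd p)))))"
      by (subst nn_integral_density) auto
    also have "\<dots> = (\<integral>\<^sup>+ x. (indicator A x * ennreal (exp (- cplus M R a x))) \<partial>xmarg_exp M R a)"
      unfolding xmarg_exp_def by (subst nn_integral_distr) auto
    also have "\<dots> = (\<integral>\<^sup>+ x. ennreal (g x) * (indicator A x * ennreal (exp (- cplus M R a x))) \<partial>M)"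
      unfolding gx by (subst nn_integral_density) auto
    also have "\<dots> = (\<integral>\<^sup>+ x. indicator A x \<partial>M)"
      apply (rule nn_integral_cong_AE)
      using gae apply eventually_elim
      using gp by (auto simp: indicator_def exp_minus ennreal_mult[symmetric] less_imp_le less_imp_neq[symmetric])
    also have "\<dots> = emeasure M A" by simp
    finally show "emeasure (distr (gibbs M R a) M fst) A = emeasure M A" .
  qed
qed

lemma gibbs_prob:
  assumes a[measurable]: "a \<in> borel_measurable N" and w: "cplus_welldef M R a"
  shows "prob_space (gibbs M R a)"
proof
  have "emeasure (gibbs M R a) (space (gibbs M R a)) = emeasure (distr (gibbs M R a) M fst) (space M)"
    using measurable_space[OF fst_meas] by (subst emeasure_distr) (auto intro!: arg_cong[where f="emeasure _"])
  then show "emeasure (gibbs M R a) (space (gibbs M R a)) = 1"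
    using gibbs_marg[OF a w] prob_space.emeasure_space_1[OF M] by simp
qed


definition "uu a b p = (a (snd p) - cplus M R a (fst p)) - (b (snd p) - cplus M R b (fst p))"

lemma uu_meas[measurable]:
  assumes [measurable]: "a \<in> borel_measurable N" "b \<in> borel_measurable N"
  shows "uu a b \<in> borel_measurable R"
  unfolding uu_def by measurable

lemma uu_int:
  assumes a[measurable]: "a \<in> borel_measurable N" and b[measurable]: "b \<in> borel_measurable N"
    and wa: "cplus_welldef M R a" and wb: "cplus_welldef M R b"
    and ia: "integrable M (cplus M R a)" and ib: "integrable M (cplus M R b)"
    and ja: "integrable (ymarg N (gibbs M R b)) a" and jb: "integrable (ymarg N (gibbs M R b)) b"
  shows "integrable (gibbs M R b) (uu a b)"
    "(\<integral>p. uu a b p \<partial>gibbs M R b) = ((\<integral>y. a y \<partial>ymarg N (gibbs M R b)) - Ffun M R a)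
        - ((\<integral>y. b y \<partial>ymarg N (gibbs M R b)) - Ffun M R b)"
proof -
  have m: "distr (gibbs M R b) M fst = M" by (rule gibbs_marg[OF b wb])
  have i1: "integrable (gibbs M R b) (\<lambda>p. a (snd p))"
    using ja integrable_distr_eq[of snd "gibbs M R b" N a] by (simp add: ymarg_def)
  have i2: "integrable (gibbs M R b) (\<lambda>p. b (snd p))"
    using jb integrable_distr_eq[of snd "gibbs M R b" N b] by (simp add: ymarg_def)
  have i3: "integrable (gibbs M R b) (\<lambda>p. cplus M R a (fst p))"
    using ia integrable_distr_eq[of fst "gibbs M R b" M "cplus M R a"] m by simp
  have i4: "integrable (gibbs M R b) (\<lambda>p. cplus M R b (fst p))"
    using ib integrable_distr_eq[of fst "gibbs M R b" M "cplus M R b"] m by simp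
  have e1: "(\<integral>p. a (snd p) \<partial>gibbs M R b) = (\<integral>y. a y \<partial>ymarg N (gibbs M R b))"
    unfolding ymarg_def by (subst integral_distr) auto
  have e2: "(\<integral>p. b (snd p) \<partial>gibbs M R b) = (\<integral>y. b y \<partial>ymarg N (gibbs M R b))"
    unfolding ymarg_def by (subst integral_distr) auto
  have e3: "(\<integral>p. cplus M R a (fst p) \<partial>gibbs M R b) = Ffun M R a"
    unfolding Ffun_def by (subst m[symmetric], subst integral_distr) auto
  have e4: "(\<integral>p. cplus M R b (fst p) \<partial>gibbs M R b) = Ffun M R b"
    unfolding Ffun_def by (subst m[symmetric], subst integral_distr) auto
  show "integrable (gibbs M R b) (uu a b)"
    unfolding uu_def using i1 i2 i3 i4 by auto
  show "(\<integral>p. uu a b p \<partial>gibbs M R b) = ((\<integral>y. a y \<partial>ymarg N (gibbs M R b)) - Ffun M R a)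
        - ((\<integral>y. b y \<partial>ymarg N (gibbs M R b)) - Ffun M R b)"
    unfolding uu_def using i1 i2 i3 i4 e1 e2 e3 e4 by (simp add: Bochner_Integration.integral_diff)
qed

lemma breg_eq:
  assumes a[measurable]: "a \<in> borel_measurable N" and b[measurable]: "b \<in> borel_measurable N"
    and wa: "cplus_welldef M R a" and wb: "cplus_welldef M R b"
    and ia: "integrable M (cplus M R a)" and ib: "integrable M (cplus M R b)"
    and ja: "integrable (ymarg N (gibbs M R b)) a" and jb: "integrable (ymarg N (gibbs M R b)) b"
  shows "bregman_F M N R a b = - (\<integral>p. uu a b p \<partial>gibbs M R b)"
  using uu_int[OF assms] ja jb
  by (simp add: bregman_F_def Bochner_Integration.integral_diff)

lemma breg_nonneg:
  assumes a[measurable]: "a \<in> borel_measurable N" and b[measurable]: "b \<in> borel_measurable N"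
    and wa: "cplus_welldef M R a" and wb: "cplus_welldef M R b"
    and ia: "integrable M (cplus M R a)" and ib: "integrable M (cplus M R b)"
    and ja: "integrable (ymarg N (gibbs M R b)) a" and jb: "integrable (ymarg N (gibbs M R b)) b"
  shows "0 \<le> bregman_F M N R a b"
proof -
  interpret pb: prob_space "gibbs M R b" by (rule gibbs_prob[OF b wb])
  interpret pa: prob_space "gibbs M R a" by (rule gibbs_prob[OF a wa])
  have "(\<integral>\<^sup>+ p. ennreal (exp (uu a b p)) \<partial>gibbs M R b)
      = (\<integral>\<^sup>+ p. ennreal (exp (b (snd p) - cplus M R b (fst p))) * ennreal (exp (uu a b p)) \<partial>R)"
    unfolding gibbs_def by (subst nn_integral_density) auto
  also have "\<dots> = (\<integral>\<^sup>+ p. ennreal (exp (a (snd p) - cplus M R a (fst p))) * indicator (space R) p \<partial>R)"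
    by (intro nn_integral_cong) (simp add: uu_def ennreal_mult[symmetric] exp_add[symmetric])
  also have "\<dots> = emeasure (gibbs M R a) (space (gibbs M R a))"
    unfolding gibbs_def by (subst emeasure_density) auto
  also have "\<dots> = 1" by (rule pa.emeasure_space_1)
  finally have nn: "(\<integral>\<^sup>+ p. ennreal (exp (uu a b p)) \<partial>gibbs M R b) = 1" .
  have ie: "integrable (gibbs M R b) (\<lambda>p. exp (uu a b p))"
    by (rule integrableI_nonneg) (auto simp: nn)
  have ee: "(\<integral>p. exp (uu a b p) \<partial>gibbs M R b) = 1"
    by (subst integral_eq_nn_integral) (auto simp: nn)
  have "(\<integral>p. uu a b p \<partial>gibbs M R b) \<le> (\<integral>p. exp (uu a b p) - 1 \<partial>gibbs M R b)"
    using uu_int(1)[OF assms] ie exp_ge_add_one_self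
    by (intro integral_mono) (auto simp: add.commute[of 1] le_diff_eq)
  also have "\<dots> = 0" using ie ee pb.prob_space by (simp add: Bochner_Integration.integral_diff)
  finally show ?thesis using breg_eq[OF assms] by simp
qed

lemma KL_eq:
  assumes a[measurable]: "a \<in> borel_measurable N" and b[measurable]: "b \<in> borel_measurable N"
    and wa: "cplus_welldef M R a" and wb: "cplus_welldef M R b"
    and ia: "integrable M (cplus M R a)" and ib: "integrable M (cplus M R b)"
    and ja: "integrable (ymarg N (gibbs M R b)) a" and jb: "integrable (ymarg N (gibbs M R b)) b"
  shows "KL_divergence (exp 1) (gibbs M R a) (gibbs M R b) = bregman_F M N R a b"
proof -
  interpret pa: prob_space "gibbs M R a" by (rule gibbs_prob[OF a wa])
  have dd: "density (gibbs M R a) (\<lambda>p. ennreal (exp (- uu a b p))) = gibbs M R b"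
    unfolding gibbs_def
    by (subst density_density_eq) (auto intro!: density_cong simp: uu_def ennreal_mult[symmetric] exp_add[symmetric])
  have "AE p in gibbs M R a. ennreal (exp (- uu a b p)) = RN_deriv (gibbs M R a) (gibbs M R b) p"
    by (rule pa.RN_deriv_unique[OF _ dd]) auto
  then have "AE p in gibbs M R b. ennreal (exp (- uu a b p)) = RN_deriv (gibbs M R a) (gibbs M R b) p"
    by (subst dd[symmetric], subst AE_density) (auto elim: AE_mp)
  then have "AE p in gibbs M R b. entropy_density (exp 1) (gibbs M R a) (gibbs M R b) p = - uu a b p"
  proof eventually_elim
    case (elim p)
    show ?case by (simp add: entropy_density_def log_def flip: elim)
  qed
  then have "KL_divergence (exp 1) (gibbs M R a) (gibbs M R b) = (\<integral>p. - uu a b p \<partial>gibbs M R b)"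
    unfolding KL_divergence_def by (rule integral_cong_AE[rotated 2]) auto
  then show ?thesis using breg_eq[OF assms] by simp
qed


lemma Fstar_eq:
  assumes c[measurable]: "c \<in> borel_measurable N" and wc: "cplus_welldef M R c"
    and ic: "integrable M (cplus M R c)" and jc: "integrable (ymarg N (gibbs M R c)) c"
  shows "Fstar M N R (ymarg N (gibbs M R c)) = ereal ((\<integral>y. c y \<partial>ymarg N (gibbs M R c)) - Ffun M R c)"
  unfolding Fstar_def
proof (rule antisym)
  show "(SUP \<psi>\<in>{\<psi>. Fdom M N R \<psi> \<and> integrable (ymarg N (gibbs M R c)) \<psi>}.
          ereal ((\<integral>y. \<psi> y \<partial>ymarg N (gibbs M R c)) - Ffun M R \<psi>))
        \<le> ereal ((\<integral>y. c y \<partial>ymarg N (gibbs M R c)) - Ffun M R c)"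
  proof (rule SUP_least)
    fix \<psi> assume "\<psi> \<in> {\<psi>. Fdom M N R \<psi> \<and> integrable (ymarg N (gibbs M R c)) \<psi>}"
    then have p: "\<psi> \<in> borel_measurable N" "cplus_welldef M R \<psi>" "integrable M (cplus M R \<psi>)"
      "integrable (ymarg N (gibbs M R c)) \<psi>" by (auto simp: Fdom_def)
    have "0 \<le> bregman_F M N R \<psi> c"
      by (rule breg_nonneg[OF p(1) c p(2) wc p(3) ic p(4) jc])
    then show "ereal ((\<integral>y. \<psi> y \<partial>ymarg N (gibbs M R c)) - Ffun M R \<psi>)
        \<le> ereal ((\<integral>y. c y \<partial>ymarg N (gibbs M R c)) - Ffun M R c)"
      using p(4) jc by (simp add: bregman_F_def Bochner_Integration.integral_diff)
  qed
  show "ereal ((\<integral>y. c y \<partial>ymarg N (gibbs M R c)) - Ffun M R c) \<le>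
     (SUP \<psi>\<in>{\<psi>. Fdom M N R \<psi> \<and> integrable (ymarg N (gibbs M R c)) \<psi>}.
          ereal ((\<integral>y. \<psi> y \<partial>ymarg N (gibbs M R c)) - Ffun M R \<psi>))"
    by (rule SUP_upper) (use c wc ic jc in \<open>auto simp: Fdom_def\<close>)
qed

end

theorem lemma3p5:
  fixes M :: "'a measure" and N :: "'b measure" and R :: "('a \<times> 'b) measure"
    and \<phi> \<phi>' :: "'b \<Rightarrow> real"
  assumes "prob_space M" and "prob_space N"
    and "sets R = sets (M \<Otimes>\<^sub>M N)"
    and "\<phi> \<in> borel_measurable N" and "\<phi>' \<in> borel_measurable N"
    and "cplus_welldef M R \<phi>" and "cplus_welldef M R \<phi>'"
    and "integrable M (cplus M R \<phi>)" and "integrable M (cplus M R \<phi>')"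
    and "integrable (ymarg N (gibbs M R \<phi>)) \<phi>" and "integrable (ymarg N (gibbs M R \<phi>)) \<phi>'"
    and "integrable (ymarg N (gibbs M R \<phi>')) \<phi>" and "integrable (ymarg N (gibbs M R \<phi>')) \<phi>'"
  shows "ereal (bregman_F M N R \<phi> \<phi>')
           = bregman_Fstar M N R \<phi> (ymarg N (gibbs M R \<phi>')) (ymarg N (gibbs M R \<phi>))
       \<and> bregman_Fstar M N R \<phi> (ymarg N (gibbs M R \<phi>')) (ymarg N (gibbs M R \<phi>))
           = ereal (KL_divergence (exp 1) (gibbs M R \<phi>) (gibbs M R \<phi>'))"
proof -
  have kl: "KL_divergence (exp 1) (gibbs M R \<phi>) (gibbs M R \<phi>') = bregman_F M N R \<phi> \<phi>'"
    by (rule KL_eq[OF assms(1,3,4,5,6,7,8,9,12,13)])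
  have f1: "Fstar M N R (ymarg N (gibbs M R \<phi>)) = ereal ((\<integral>y. \<phi> y \<partial>ymarg N (gibbs M R \<phi>)) - Ffun M R \<phi>)"
    by (rule Fstar_eq[OF assms(1,3,4,6,8,10)])
  have f2: "Fstar M N R (ymarg N (gibbs M R \<phi>')) = ereal ((\<integral>y. \<phi>' y \<partial>ymarg N (gibbs M R \<phi>')) - Ffun M R \<phi>')"
    by (rule Fstar_eq[OF assms(1,3,5,7,9,13)])
  have "bregman_Fstar M N R \<phi> (ymarg N (gibbs M R \<phi>')) (ymarg N (gibbs M R \<phi>)) = ereal (bregman_F M N R \<phi> \<phi>')"
    unfolding bregman_Fstar_def f1 f2 bregman_F_def
    using assms(12,13) by (simp add: Bochner_Integration.integral_diff)
  then show ?thesis using kl by simp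
qed

end
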